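(* Let $s\in\mathbb{N}$, let $A=(a_{ij})\in\mathbb{R}^{s\times s}$ be weakly positive definite, let $\mu\in\{1,2\}$ and $h_t>0$. Define $\mathcal{A}:\mathbf{V}\to\mathbf{V}^*$ by $$\langle \mathcal{A}\mathbf{u},\mathbf{v}\rangle=\sum_{i=1}^s\langle u_i,v_i\rangle_{L^2}+h_t^{\mu}\sum_{i=1}^s\sum_{j=1}^s a_{ij}\langle u_j,v_i\rangle_{H_0^1},\qquad \mathbf{u},\mathbf{v}\in\mathbf{V},$$ i.e. $\mathcal{A}=\mathbb{I}^{s\times s}\otimes\mathcal{I}+h_t^{\mu}A\otimes\mathcal{K}$ in weak form. Then $\mathcal{A}$ is an isomorphism from $\mathbf{V}$ onto $\mathbf{V}^*$, and there are finite constants $c_1,c_2$, depending only on $A$ and $s$ (in particular independent of $h_t$), such that $$\|\mathcal{A}\|_{\mathcal{L}(\mathbf{V},\mathbf{V}^* )}\le c_1,\qquad \|\mathcal{A}^{-1}\|_{\mathcal{L}(\mathbf{V}^*,\mathbf{V})}\le c_2.$$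
   Context: A real matrix $A\in\mathbb{R}^{s\times s}$ is called weakly positive definite if there exists a symmetric positive definite matrix $C\in\mathbb{R}^{s\times s}$ such that $CA$ is positive definite, i.e. $x^TCAx>0$ for all nonzero $x\in\mathbb{R}^s$. Let $\Omega\subset\mathbb{R}^d$ be a bounded polygonal domain whose boundary is partitioned into disjoint parts $\partial\Omega_N,\partial\Omega_D$. Let $\alpha,\beta\in L^\infty(\Omega)$ with $\alpha>0$ (bounded below by a positive constant) and $\beta\ge 0$ on $\Omega$. Define $\langle u,v\rangle_{L^2}=\int_\Omega uv$ and $\langle u,v\rangle_{H_0^1}=\int_\Omega(\alpha\nabla u\cdot\nabla v+\beta uv)$ (possibly only a semi-inner product), with $\|u\|_{H_0^1}^2=\langle u,u\rangle_{H_0^1}$; this is the weak form of $\mathcal{K}u=-\nabla\cdot(\alpha\nabla u)+\beta u$. Let $V$ be the space of $H^1(\Omega)$ functions vanishing on $\partial\Omega_D$, with inner product $\langle u,v\rangle_V=\langle u,v\rangle_{L^2}+h_t^{\mu}\langle u,v\rangle_{H_0^1}$ and norm $\|u\|_V^2=\|u\|_{L^2}^2+h_t^{\mu}\|u\|_{H_0^1}^2$. Let $\mathbf{V}=V^s$ with $\langle\mathbf{u},\mathbf{v}\rangle_{\mathbf{V}}=\sum_{i=1}^s\langle u_i,v_i\rangle_V$ and induced norm, and let $\mathbf{V}^*$ be its dual with the dual norm. *)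

theory Defs
  imports "HOL-Analysis.Analysis"
begin

definition posdef :: "real^'n^'n \<Rightarrow> bool" where
  "posdef M \<longleftrightarrow> (\<forall>x::real^'n. x \<noteq> 0 \<longrightarrow> x \<bullet> (M *v x) > 0)"

definition weakly_posdef :: "real^'n^'n \<Rightarrow> bool" where
  "weakly_posdef A \<longleftrightarrow> (\<exists>C. transpose C = C \<and> posdef C \<and> posdef (C ** A))"

definition Vnorm :: "('v \<Rightarrow> 'v \<Rightarrow> real) \<Rightarrow> ('v \<Rightarrow> 'v \<Rightarrow> real) \<Rightarrow> real \<Rightarrow> nat \<Rightarrow> 'v \<Rightarrow> real" where
  "Vnorm L K h \<mu> u = sqrt (L u u + h ^ \<mu> * K u u)"

text \<open>Abstract setting of the paper: V is a real vector space on which L is a symmetric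
  positive definite bilinear form (L2 inner product), K is a symmetric positive semidefinite
  bilinear form (H_0^1 semi-inner product), and V is complete w.r.t. ||.||_V.\<close>
definition hilbert_setting ::
  "('v::real_vector \<Rightarrow> 'v \<Rightarrow> real) \<Rightarrow> ('v \<Rightarrow> 'v \<Rightarrow> real) \<Rightarrow> real \<Rightarrow> nat \<Rightarrow> bool" where
  "hilbert_setting L K h \<mu> \<longleftrightarrow>
     bilinear L \<and> bilinear K \<and> (\<forall>u v. L u v = L v u) \<and> (\<forall>u v. K u v = K v u) \<and>
     (\<forall>u. u \<noteq> 0 \<longrightarrow> L u u > 0) \<and> (\<forall>u. K u u \<ge> 0) \<and>
     (\<forall>X::nat \<Rightarrow> 'v. (\<forall>e>0. \<exists>N. \<forall>m\<ge>N. \<forall>n\<ge>N. Vnorm L K h \<mu> (X m - X n) < e)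
        \<longrightarrow> (\<exists>x. (\<lambda>n. Vnorm L K h \<mu> (X n - x)) \<longlonglongrightarrow> 0))"

definition VVnorm :: "('v \<Rightarrow> 'v \<Rightarrow> real) \<Rightarrow> ('v \<Rightarrow> 'v \<Rightarrow> real) \<Rightarrow> real \<Rightarrow> nat \<Rightarrow> 'v^'s::finite \<Rightarrow> real" where
  "VVnorm L K h \<mu> u = sqrt (\<Sum>i\<in>UNIV. L (u$i) (u$i) + h ^ \<mu> * K (u$i) (u$i))"

definition Vdual :: "('v::real_vector \<Rightarrow> 'v \<Rightarrow> real) \<Rightarrow> ('v \<Rightarrow> 'v \<Rightarrow> real) \<Rightarrow> real \<Rightarrow> nat
     \<Rightarrow> ('v^'s::finite \<Rightarrow> real) set" where
  "Vdual L K h \<mu> = {f. linear f \<and> (\<exists>C. \<forall>u. \<bar>f u\<bar> \<le> C * VVnorm L K h \<mu> u)}"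

definition dualnorm :: "('v \<Rightarrow> 'v \<Rightarrow> real) \<Rightarrow> ('v \<Rightarrow> 'v \<Rightarrow> real) \<Rightarrow> real \<Rightarrow> nat
     \<Rightarrow> ('v^'s::finite \<Rightarrow> real) \<Rightarrow> real" where
  "dualnorm L K h \<mu> f = (SUP u. \<bar>f u\<bar> / VVnorm L K h \<mu> u)"

definition Aop :: "real^'s^'s \<Rightarrow> ('v \<Rightarrow> 'v \<Rightarrow> real) \<Rightarrow> ('v \<Rightarrow> 'v \<Rightarrow> real) \<Rightarrow> real \<Rightarrow> nat
     \<Rightarrow> 'v^'s::finite \<Rightarrow> ('v^'s \<Rightarrow> real)" where
  "Aop A L K h \<mu> u = (\<lambda>v. (\<Sum>i\<in>UNIV. L (u$i) (v$i))
       + h ^ \<mu> * (\<Sum>i\<in>UNIV. \<Sum>j\<in>UNIV. A$i$j * K (u$j) (v$i)))"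

end

theory Submission
  imports Defs
begin


lemma quad_disc:
  fixes a b c :: real
  assumes c: "c \<ge> 0" and h: "\<And>t. 0 \<le> a + b*t + c*t^2"
  shows "b^2 \<le> 4*a*c"
proof (cases "c = 0")
  case True
  show ?thesis
  proof (rule ccontr)
    assume "\<not> ?thesis"
    then have "b \<noteq> 0" using True by auto
    have "0 \<le> a + b*(-(\<bar>a\<bar>+1)/b)" using h[of "-(\<bar>a\<bar>+1)/b"] True by simp
    also have "\<dots> = a - (\<bar>a\<bar>+1)" using \<open>b\<noteq>0\<close> by (simp add: field_simps)
    finally show False by linarith
  qed
next
  case False
  then have cp: "c > 0" using c by auto
  have "0 \<le> a + b*(-b/(2*c)) + c*(-b/(2*c))^2" by (rule h)
  also have "\<dots> = a - b^2/(4*c)" using cp by (simp add: field_simps power2_eq_square)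
  finally have "b^2/(4*c) \<le> a" by simp
  then show ?thesis using cp by (simp add: field_simps)
qed

locale psdform =
  fixes B :: "'w::real_vector \<Rightarrow> 'w \<Rightarrow> real"
  assumes addL: "B (x+y) z = B x z + B y z"
    and scaleL: "B (c *\<^sub>R x) z = c * B x z"
    and symm: "B x y = B y x"
    and nonneg: "B x x \<ge> 0"
begin

lemma addR: "B z (x+y) = B z x + B z y"
  using addL symm by metis
lemma scaleR: "B z (c *\<^sub>R x) = c * B z x"
  using scaleL symm by metis
lemma zeroL[simp]: "B 0 z = 0"
  using scaleL[of 0 z z] by simp
lemma zeroR[simp]: "B z 0 = 0"
  using scaleR[of z 0 z] by simp
lemma minusL: "B (-x) z = - B x z"
  using scaleL[of "-1" x z] by simp
lemma minusR: "B z (-x) = - B z x"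
  using scaleR[of z "-1" x] by simp
lemma diffL: "B (x-y) z = B x z - B y z"
  using addL[of x "-y" z] minusL by simp
lemma diffR: "B z (x-y) = B z x - B z y"
  using addR[of z x "-y"] minusR by simp
lemma sumL: "B (sum f S) z = (\<Sum>i\<in>S. B (f i) z)"
  by (induction S rule: infinite_finite_induct) (auto simp: addL)
lemma sumR: "B z (sum f S) = (\<Sum>i\<in>S. B z (f i))"
  by (induction S rule: infinite_finite_induct) (auto simp: addR)

lemma CS2: "(B x y)^2 \<le> B x x * B y y"
proof -
  have "\<And>t. 0 \<le> B x x + (2 * B x y) * t + B y y * t^2"
  proof -
    fix t
    have "B (x + t *\<^sub>R y) (x + t *\<^sub>R y) = B x x + (2 * B x y) * t + B y y * t^2"
      by (simp add: addL addR scaleL scaleR symm[of y x] power2_eq_square algebra_simps)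
    then show "0 \<le> B x x + (2 * B x y) * t + B y y * t^2" using nonneg by metis
  qed
  from quad_disc[OF nonneg this] show ?thesis by (simp add: power2_eq_square)
qed

lemma CS: "\<bar>B x y\<bar> \<le> sqrt (B x x) * sqrt (B y y)"
proof -
  have "sqrt ((B x y)^2) \<le> sqrt (B x x * B y y)" using CS2 real_sqrt_le_mono by blast
  then show ?thesis by (simp add: real_sqrt_mult)
qed

lemma null: "B x x = 0 \<Longrightarrow> B x y = 0"
  using CS2[of x y] by simp

end




lemma aux_lin: "(p::real) < d + r \<Longrightarrow> q < d + s \<Longrightarrow> (p - d)/2 + (q-d)/2 < r/2 + s/2"
  by (simp add: field_simps)

lemma aux2: "(x::real) \<le> z \<Longrightarrow> y \<le> z \<Longrightarrow> x/2 + y/2 \<le> z"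
  by (simp add: field_simps)

locale ipspace = psdform ip for ip :: "'w::real_vector \<Rightarrow> 'w \<Rightarrow> real" +
  assumes pos: "x \<noteq> 0 \<Longrightarrow> ip x x > 0"
    and complete: "(\<forall>e>0. \<exists>N. \<forall>m\<ge>N. \<forall>n\<ge>N. sqrt (ip (X m - X n) (X m - X n)) < e)
        \<Longrightarrow> \<exists>x. (\<lambda>n. sqrt (ip (X n - x) (X n - x))) \<longlonglongrightarrow> 0"
begin

definition nrm where "nrm x = sqrt (ip x x)"

lemma nrm_ge0: "nrm x \<ge> 0" using nonneg[of x] by (simp add: nrm_def)
lemma nrm_sq: "(nrm x)^2 = ip x x" using nonneg[of x] by (simp add: nrm_def)
lemma ipCS: "\<bar>ip x y\<bar> \<le> nrm x * nrm y" using CS by (simp add: nrm_def)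

lemma uniq: "(\<And>v. ip x v = ip y v) \<Longrightarrow> x = y"
proof -
  assume h: "\<And>v. ip x v = ip y v"
  have "ip (x-y) (x-y) = 0" using h[of "x-y"] by (simp add: diffL)
  then show "x = y" using pos[of "x-y"] by (cases "x = y") auto
qed

lemma symLM:
  fixes a :: "'w \<Rightarrow> 'w \<Rightarrow> real" and l :: "'w \<Rightarrow> real"
  assumes a_addL: "\<And>x y z. a (x+y) z = a x z + a y z"
    and a_scaleL: "\<And>c x z. a (c *\<^sub>R x) z = c * a x z"
    and a_sym: "\<And>x y. a x y = a y x"
    and alpha: "\<alpha> > 0" and a_coer: "\<And>v. a v v \<ge> \<alpha> * ip v v"
    and a_bound: "\<And>u v. \<bar>a u v\<bar> \<le> M * nrm u * nrm v"
    and l_add: "\<And>x y. l (x+y) = l x + l y"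
    and l_scale: "\<And>c x. l (c *\<^sub>R x) = c * l x"
    and l_bound: "\<And>v. \<bar>l v\<bar> \<le> Lam * nrm v"
  shows "\<exists>u. \<forall>v. a u v = l v"
proof -
  interpret aF: psdform a
  proof
    fix x y z c show "a (x+y) z = a x z + a y z" by (rule a_addL)
    show "a (c *\<^sub>R x) z = c * a x z" by (rule a_scaleL)
    show "a x y = a y x" by (rule a_sym)
    show "a x x \<ge> 0" using a_coer[of x] nonneg[of x] alpha
      by (meson dual_order.trans mult_nonneg_nonneg less_imp_le)
  qed
  have l_diff: "l (x - y) = l x - l y" for x y
    using l_add[of x "-y"] l_scale[of "-1" y] by simp
  define J where "J v = a v v / 2 - l v" for v
  have Jlow: "J v \<ge> - (Lam^2) / (2*\<alpha>)" for v
  proof -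
    have "- l v \<ge> - Lam * nrm v" using l_bound[of v] by linarith
    moreover have "a v v \<ge> \<alpha> * (nrm v)^2" using a_coer[of v] nrm_sq by simp
    moreover have "\<alpha>/2 * (nrm v)^2 - Lam * nrm v \<ge> - (Lam^2) / (2*\<alpha>)"
    proof -
      have "0 \<le> \<alpha>/2 * (nrm v - Lam/\<alpha>)^2" using alpha by simp
      also have "\<dots> = \<alpha>/2 * (nrm v)^2 - Lam * nrm v + Lam^2/(2*\<alpha>)"
        using alpha by (simp add: field_simps power2_eq_square)
      finally show ?thesis by simp
    qed
    ultimately show ?thesis unfolding J_def by simp
  qed
  have bdd: "bdd_below (range J)" using Jlow by (intro bdd_belowI[of _ "- (Lam^2) / (2*\<alpha>)"]) auto
  define d where "d = Inf (range J)"
  have dle: "d \<le> J v" for v unfolding d_def using bdd by (simp add: cINF_lower)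
  have "\<forall>n::nat. \<exists>x. J x < d + 1/(real n+1)"
  proof
    fix n :: nat
    have "Inf (range J) < d + 1/(real n+1)" unfolding d_def by (simp add: add_pos_pos)
    then show "\<exists>x. J x < d + 1/(real n+1)" by (simp add: cINF_less_iff bdd)
  qed
  then obtain X where X: "\<And>n. J (X n) < d + 1/(real n+1)" by metis
  have par: "a (x-y) (x-y) / 8 = J x / 2 + J y / 2 - J ((1/2) *\<^sub>R (x+y))" for x y
    unfolding J_def
    by (simp add: aF.diffL aF.diffR aF.addL aF.addR a_scaleL aF.scaleR l_scale l_add a_sym[of y x] algebra_simps) (simp add: field_simps)
  have cauchy: "\<forall>e>0. \<exists>N. \<forall>m\<ge>N. \<forall>n\<ge>N. sqrt (ip (X m - X n) (X m - X n)) < e"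
  proof (intro allI impI)
    fix e :: real assume e: "e > 0"
    obtain N :: nat where N: "8 / (\<alpha> * e^2) < real N + 1"
      using reals_Archimedean2 by (metis add.commute add_strict_increasing zero_less_one less_imp_le)
    have "\<forall>m\<ge>N. \<forall>n\<ge>N. sqrt (ip (X m - X n) (X m - X n)) < e"
    proof (intro allI impI)
      fix m n assume mn: "m \<ge> N" "n \<ge> N"
      have "a (X m - X n) (X m - X n) / 8 \<le> (J (X m) - d)/2 + (J (X n) - d)/2"
        using par[of "X m" "X n"] dle[of "(1/2) *\<^sub>R (X m + X n)"] by argo
      also have "\<dots> < (1/(real m+1))/2 + (1/(real n+1))/2"
        using X[of m] X[of n] by (rule aux_lin)
      also have "\<dots> \<le> 1/(real N+1)"
      proof -
        have "1/(real m+1) \<le> 1/(real N+1)" "1/(real n+1) \<le> 1/(real N+1)"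
          using mn by (simp_all add: frac_le)
        then show ?thesis by (rule aux2)
      qed
      finally have "\<alpha> * ip (X m - X n) (X m - X n) < 8/(real N+1)"
        using a_coer[of "X m - X n"] by simp
      also have "\<dots> < \<alpha> * e^2" using N alpha e
        by (simp add: field_simps)
      finally have "ip (X m - X n) (X m - X n) < e^2" using alpha by simp
      then show "sqrt (ip (X m - X n) (X m - X n)) < e"
        using e by (metis abs_of_pos real_sqrt_abs real_sqrt_less_mono)
    qed
    then show "\<exists>N. \<forall>m\<ge>N. \<forall>n\<ge>N. sqrt (ip (X m - X n) (X m - X n)) < e" by blast
  qed
  obtain u where u: "(\<lambda>n. nrm (X n - u)) \<longlonglongrightarrow> 0"
    using complete[OF cauchy] unfolding nrm_def by blast
  have Ju: "J u \<le> d"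
  proof (rule ccontr)
    assume "\<not> J u \<le> d"
    define \<epsilon> where "\<epsilon> = J u - d"
    have ep: "\<epsilon> > 0" using \<open>\<not> J u \<le> d\<close> \<epsilon>_def by simp
    have diffJ: "\<bar>J (X n) - J u\<bar> \<le> M/2 * (nrm (X n - u))^2 + M * nrm u * nrm (X n - u) + Lam * nrm (X n - u)" for n
    proof -
      define w where "w = X n - u"
      have Xn: "X n = u + w" unfolding w_def by simp
      have "J (X n) - J u = a w w / 2 + a u w - l w"
        unfolding J_def Xn by (simp add: aF.addL aF.addR a_sym[of w u] l_add algebra_simps)
      moreover have "\<bar>a w w\<bar> \<le> M * (nrm w)^2" using a_bound[of w w] by (simp add: power2_eq_square)
      moreover have "\<bar>a u w\<bar> \<le> M * nrm u * nrm w" by (rule a_bound)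
      moreover have "\<bar>l w\<bar> \<le> Lam * nrm w" by (rule l_bound)
      ultimately show ?thesis unfolding w_def[symmetric] by (simp add: abs_le_iff)
    qed
    have "(\<lambda>n. M/2 * (nrm (X n - u))^2 + M * nrm u * nrm (X n - u) + Lam * nrm (X n - u)) \<longlonglongrightarrow>
        M/2 * 0^2 + M * nrm u * 0 + Lam * 0"
      by (intro tendsto_intros u)
    then have "eventually (\<lambda>n. M/2 * (nrm (X n - u))^2 + M * nrm u * nrm (X n - u) + Lam * nrm (X n - u) < \<epsilon>/2) sequentially"
      using ep by (intro order_tendstoD) auto
    moreover have "eventually (\<lambda>n. 1/(real n+1) < \<epsilon>/2) sequentially"
    proof -
      have "(\<lambda>n. 1/(real n+1)) \<longlonglongrightarrow> 0" using LIMSEQ_inverse_real_of_nat by (simp add: inverse_eq_divide add.commute)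
      then show ?thesis using ep by (intro order_tendstoD) auto
    qed
    ultimately obtain n where n1: "M/2 * (nrm (X n - u))^2 + M * nrm u * nrm (X n - u) + Lam * nrm (X n - u) < \<epsilon>/2"
      and n2: "1/(real n+1) < \<epsilon>/2"
      using eventually_sequentially by (metis (mono_tags, lifting) eventually_conj_iff eventually_happens' sequentially_bot)
    have "J u \<le> J (X n) + \<epsilon>/2" using diffJ[of n] n1 by (simp add: abs_le_iff)
    also have "\<dots> < d + \<epsilon>" using X[of n] n2 by simp
    finally show False unfolding \<epsilon>_def by simp
  qed
  have "a u v = l v" for v
  proof -
    have "\<And>t. 0 \<le> 0 + (a u v - l v) * t + (a v v / 2) * t^2"
    proof -
      fix t
      have "J (u + t *\<^sub>R v) - J u = (a u v - l v) * t + (a v v / 2) * t^2"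
        unfolding J_def by (simp add: aF.addL aF.addR a_scaleL aF.scaleR a_sym[of v u] l_add l_scale power2_eq_square algebra_simps)
      moreover have "J u \<le> J (u + t *\<^sub>R v)" using Ju dle by (meson order_trans)
      ultimately show "0 \<le> 0 + (a u v - l v) * t + (a v v / 2) * t^2" by simp
    qed
    from quad_disc[OF _ this] aF.nonneg[of v] have "(a u v - l v)^2 \<le> 0" by simp
    then show ?thesis by simp
  qed
  then show ?thesis by blast
qed

end



context ipspace begin

lemma riesz:
  assumes l_add: "\<And>x y. l (x+y) = l x + l y"
    and l_scale: "\<And>c x. l (c *\<^sub>R x) = c * l x"
    and l_bound: "\<And>v. \<bar>l v\<bar> \<le> Lam * nrm v"
  shows "\<exists>r. \<forall>v. ip r v = l v"
  apply (rule symLM[of ip 1 1 l Lam])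
  apply (rule addL)
  apply (rule scaleL)
  apply (rule symm)
  apply simp
  apply simp
  apply (simp add: ipCS)
  apply (rule l_add)
  apply (rule l_scale)
  apply (rule l_bound)
  done

lemma laxmilgram:
  fixes b :: "'w \<Rightarrow> 'w \<Rightarrow> real" and g :: "'w \<Rightarrow> real"
  assumes b_addL: "\<And>x y z. b (x+y) z = b x z + b y z"
    and b_scaleL: "\<And>c x z. b (c *\<^sub>R x) z = c * b x z"
    and b_addR: "\<And>x y z. b z (x+y) = b z x + b z y"
    and b_scaleR: "\<And>c x z. b z (c *\<^sub>R x) = c * b z x"
    and alpha: "\<alpha> > 0" and b_coer: "\<And>v. b v v \<ge> \<alpha> * ip v v"
    and M: "M \<ge> 0" and b_bound: "\<And>u v. \<bar>b u v\<bar> \<le> M * nrm u * nrm v"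
    and g_add: "\<And>x y. g (x+y) = g x + g y"
    and g_scale: "\<And>c x. g (c *\<^sub>R x) = c * g x"
    and g_bound: "\<And>v. \<bar>g v\<bar> \<le> Lam * nrm v"
  shows "\<exists>u. \<forall>v. b u v = g v"
proof -
  have "\<forall>u. \<exists>w. \<forall>v. ip w v = b u v"
  proof
    fix u
    show "\<exists>w. \<forall>v. ip w v = b u v"
      apply (rule riesz[of "b u" "M * nrm u"])
      apply (rule b_addR)
      apply (rule b_scaleR)
      using b_bound by (simp add: mult.assoc)
  qed
  then obtain T where T: "\<And>u v. ip (T u) v = b u v" by metis
  have T_add: "T (x+y) = T x + T y" for x y
    by (rule uniq) (simp add: T addL b_addL)
  have T_scale: "T (c *\<^sub>R x) = c *\<^sub>R T x" for c x
    by (rule uniq) (simp add: T scaleL b_scaleL)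
  have T_bound: "nrm (T u) \<le> M * nrm u" for u
  proof (cases "nrm (T u) = 0")
    case True then show ?thesis using M nrm_ge0 by simp
  next
    case False
    then have p: "nrm (T u) > 0" using nrm_ge0 by (simp add: order_less_le)
    have "(nrm (T u))^2 = b u (T u)" using nrm_sq T by (metis symm)
    also have "\<dots> \<le> M * nrm u * nrm (T u)" using b_bound[of u "T u"] by simp
    finally have "nrm (T u) * nrm (T u) \<le> (M * nrm u) * nrm (T u)" by (simp add: power2_eq_square)
    then show ?thesis using p by simp
  qed
  have T_coer: "\<alpha> * nrm u \<le> nrm (T u)" for u
  proof (cases "nrm u = 0")
    case True then show ?thesis using nrm_ge0 by simp
  next
    case False
    then have p: "nrm u > 0" using nrm_ge0 by (simp add: order_less_le)
    have "\<alpha> * nrm u * nrm u = \<alpha> * ip u u" using nrm_sq by (simp add: power2_eq_square)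
    also have "\<dots> \<le> b u u" by (rule b_coer)
    also have "\<dots> = ip (T u) u" by (simp add: T)
    also have "\<dots> \<le> nrm (T u) * nrm u" using ipCS[of "T u" u] by simp
    finally show ?thesis using p by simp
  qed
  obtain r where r: "\<And>v. ip r v = g v" using riesz[of g Lam] g_add g_scale g_bound by blast
  have "\<exists>u. \<forall>v. ip (T u) (T v) = ip r (T v)"
  proof (rule symLM[of "\<lambda>u v. ip (T u) (T v)" "\<alpha>^2" "M^2" "\<lambda>v. ip r (T v)" "nrm r * M"])
    show "\<And>x y z. ip (T (x + y)) (T z) = ip (T x) (T z) + ip (T y) (T z)" by (simp add: T_add addL)
    show "\<And>c x z. ip (T (c *\<^sub>R x)) (T z) = c * ip (T x) (T z)" by (simp add: T_scale scaleL)
    show "\<And>x y. ip (T x) (T y) = ip (T y) (T x)" by (rule symm)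
    show "0 < \<alpha>^2" using alpha by simp
    show "\<alpha>^2 * ip v v \<le> ip (T v) (T v)" for v
    proof -
      have "\<alpha> * nrm v \<le> nrm (T v)" by (rule T_coer)
      then have "(\<alpha> * nrm v)^2 \<le> (nrm (T v))^2" using alpha nrm_ge0 by (intro power_mono) auto
      then show ?thesis by (simp add: nrm_sq power_mult_distrib)
    qed
    show "\<bar>ip (T u) (T v)\<bar> \<le> M^2 * nrm u * nrm v" for u v
    proof -
      have "\<bar>ip (T u) (T v)\<bar> \<le> nrm (T u) * nrm (T v)" by (rule ipCS)
      also have "\<dots> \<le> (M * nrm u) * (M * nrm v)"
        using T_bound nrm_ge0 M by (intro mult_mono) auto
      finally show ?thesis by (simp add: power2_eq_square algebra_simps)
    qed
    show "\<And>x y. ip r (T (x + y)) = ip r (T x) + ip r (T y)" by (simp add: T_add addR)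
    show "\<And>c x. ip r (T (c *\<^sub>R x)) = c * ip r (T x)" by (simp add: T_scale scaleR)
    show "\<bar>ip r (T v)\<bar> \<le> nrm r * M * nrm v" for v
    proof -
      have "\<bar>ip r (T v)\<bar> \<le> nrm r * nrm (T v)" by (rule ipCS)
      also have "\<dots> \<le> nrm r * (M * nrm v)" using T_bound nrm_ge0 by (intro mult_left_mono) auto
      finally show ?thesis by (simp add: mult.assoc)
    qed
  qed
  then obtain u where u: "\<And>v. ip (T u) (T v) = ip r (T v)" by blast
  define z where "z = T u - r"
  have "ip z (T z) = 0" unfolding z_def by (simp add: diffL u)
  then have "b z z = 0" using T symm by metis
  then have "ip z z \<le> 0" using b_coer[of z] alpha by (simp add: mult_le_0_iff)
  then have "z = 0" using pos[of z] by (cases "z = 0") auto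
  then have "T u = r" unfolding z_def by simp
  then have "\<forall>v. b u v = g v" using T r by metis
  then show ?thesis by blast
qed

end



context psdform begin

lemma psd_drop:
  assumes fin: "finite S" and aS: "a \<notin> S" and h: "\<And>x. B (w a) x = 0"
  shows "(\<Sum>j\<in>insert a S. \<Sum>k\<in>insert a S. P k j * B (w j) (w k)) = (\<Sum>j\<in>S. \<Sum>k\<in>S. P k j * B (w j) (w k))"
proof -
  have h': "\<And>x. B x (w a) = 0" using h symm by metis
  show ?thesis using fin aS by (simp add: h h')
qed

lemma psd_sum:
  fixes P :: "'i \<Rightarrow> 'i \<Rightarrow> real" and u :: "'i \<Rightarrow> 'w"
  assumes "finite S" and "\<forall>y. 0 \<le> (\<Sum>j\<in>S. \<Sum>k\<in>S. P k j * y j * y k)"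
  shows "0 \<le> (\<Sum>j\<in>S. \<Sum>k\<in>S. P k j * B (u j) (u k))"
  using assms
proof (induction S arbitrary: u rule: finite_induct)
  case empty then show ?case by simp
next
  case (insert a S)
  have psdS: "\<forall>y. 0 \<le> (\<Sum>j\<in>S. \<Sum>k\<in>S. P k j * y j * y k)"
  proof
    fix y :: "'i \<Rightarrow> real"
    define y' where "y' = y(a := 0)"
    have "0 \<le> (\<Sum>j\<in>insert a S. \<Sum>k\<in>insert a S. P k j * y' j * y' k)" using insert.prems by blast
    also have "\<dots> = (\<Sum>j\<in>S. \<Sum>k\<in>S. P k j * y' j * y' k)" using insert.hyps by (simp add: y'_def)
    also have "\<dots> = (\<Sum>j\<in>S. \<Sum>k\<in>S. P k j * y j * y k)"
      using insert.hyps by (intro sum.cong refl) (auto simp: y'_def)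
    finally show "0 \<le> (\<Sum>j\<in>S. \<Sum>k\<in>S. P k j * y j * y k)" .
  qed
  note IH = insert.IH[OF psdS]
  show ?case
  proof (cases "B (u a) (u a) = 0")
    case True
    then have "\<And>x. B (u a) x = 0" using null by blast
    then show ?thesis using psd_drop[OF insert.hyps(1,2)] IH by simp
  next
    case False
    define d where "d = B (u a) (u a)"
    have dp: "d > 0" using False nonneg d_def by (simp add: order_less_le)
    define c where "c j = B (u j) (u a) / d" for j
    define u' where "u' j = u j - c j *\<^sub>R u a" for j
    have ca: "c a = 1" using dp unfolding c_def d_def by simp
    have u'a: "u' a = 0" unfolding u'_def ca by simp
    have orth: "B (u' j) (u a) = 0" for j
      unfolding u'_def using dp by (simp add: diffL scaleL c_def d_def)
    have orth': "B (u a) (u' j) = 0" for j using orth symm by metis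
    have dec: "B (u j) (u k) = B (u' j) (u' k) + c j * c k * d" for j k
    proof -
      have uj: "u j = u' j + c j *\<^sub>R u a" "u k = u' k + c k *\<^sub>R u a" unfolding u'_def by simp_all
      show ?thesis unfolding uj(1) uj(2)
        by (simp add: addL addR scaleL scaleR orth orth' d_def)
    qed
    have "(\<Sum>j\<in>insert a S. \<Sum>k\<in>insert a S. P k j * B (u j) (u k)) =
        (\<Sum>j\<in>insert a S. \<Sum>k\<in>insert a S. P k j * B (u' j) (u' k)) +
        d * (\<Sum>j\<in>insert a S. \<Sum>k\<in>insert a S. P k j * c j * c k)"
      by (simp add: dec distrib_left sum.distrib sum_distrib_left algebra_simps)
    also have "(\<Sum>j\<in>insert a S. \<Sum>k\<in>insert a S. P k j * B (u' j) (u' k)) =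
        (\<Sum>j\<in>S. \<Sum>k\<in>S. P k j * B (u' j) (u' k))"
      by (rule psd_drop[OF insert.hyps(1,2)]) (simp add: u'a)
    finally show ?thesis using IH[of u'] insert.prems dp by simp
  qed
qed

lemma sum_delta_split:
  fixes M F :: "'i \<Rightarrow> 'i \<Rightarrow> real"
  assumes "finite S"
  shows "(\<Sum>j\<in>S. \<Sum>k\<in>S. (M k j - (if k = j then c else 0)) * F j k)
     = (\<Sum>j\<in>S. \<Sum>k\<in>S. M k j * F j k) - c * (\<Sum>j\<in>S. F j j)"
proof -
  have "(\<Sum>k\<in>S. (if k = j then c else 0) * F j k) = (if j \<in> S then c * F j j else 0)" for j
  proof -
    have "(\<Sum>k\<in>S. (if k = j then c else 0) * F j k) = (\<Sum>k\<in>S. if k = j then c * F j j else 0)"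
      by (intro sum.cong refl) auto
    also have "\<dots> = (if j \<in> S then c * F j j else 0)" using assms by (simp add: sum.delta)
    finally show ?thesis .
  qed
  then show ?thesis using assms
    by (simp add: left_diff_distrib sum_subtractf sum_distrib_left)
qed

lemma matrix_form_coer:
  fixes M :: "real^'n^'n" and u :: "'w^'n"
  assumes h: "\<And>x. c * (x \<bullet> x) \<le> x \<bullet> (M *v x)"
  shows "c * (\<Sum>j\<in>UNIV. B (u$j) (u$j)) \<le> (\<Sum>j\<in>UNIV. \<Sum>k\<in>UNIV. M$k$j * B (u$j) (u$k))"
proof -
  define P where "P k j = M$k$j - (if k = j then c else 0)" for k j
  have psdP: "\<forall>y. 0 \<le> (\<Sum>j\<in>UNIV. \<Sum>k\<in>UNIV. P k j * y j * y k)"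
  proof
    fix y :: "'n \<Rightarrow> real"
    define x where "x = (\<chi> i. y i)"
    have "x \<bullet> (M *v x) = (\<Sum>k\<in>UNIV. \<Sum>j\<in>UNIV. M$k$j * y j * y k)"
      unfolding x_def inner_vec_def matrix_vector_mult_def
      by (simp add: sum_distrib_left sum_distrib_right algebra_simps)
    also have "\<dots> = (\<Sum>j\<in>UNIV. \<Sum>k\<in>UNIV. M$k$j * y j * y k)" by (rule sum.swap)
    finally have e1: "x \<bullet> (M *v x) = (\<Sum>j\<in>UNIV. \<Sum>k\<in>UNIV. M$k$j * y j * y k)" .
    have e2: "x \<bullet> x = (\<Sum>j\<in>UNIV. y j * y j)" unfolding x_def inner_vec_def by simp
    have "(\<Sum>j\<in>UNIV. \<Sum>k\<in>UNIV. P k j * y j * y k) = x \<bullet> (M *v x) - c * (x \<bullet> x)"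
      unfolding e1 e2 P_def using sum_delta_split[of UNIV "\<lambda>k j. M$k$j" c "\<lambda>j k. y j * y k"]
      by (simp add: mult.assoc)
    then show "0 \<le> (\<Sum>j\<in>UNIV. \<Sum>k\<in>UNIV. P k j * y j * y k)" using h[of x] by simp
  qed
  have fU: "finite (UNIV::'n set)" by simp
  from psd_sum[OF fU psdP, of "\<lambda>j. u$j"]
  have "0 \<le> (\<Sum>j\<in>UNIV. \<Sum>k\<in>UNIV. P k j * B (u$j) (u$k))" .
  also have "\<dots> = (\<Sum>j\<in>UNIV. \<Sum>k\<in>UNIV. M$k$j * B (u$j) (u$k)) - c * (\<Sum>j\<in>UNIV. B (u$j) (u$j))"
    unfolding P_def by (rule sum_delta_split[of UNIV "\<lambda>k j. M$k$j" c "\<lambda>j k. B (u$j) (u$k)", simplified])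
  finally show ?thesis by simp
qed

end

lemma posdef_coercive:
  fixes M :: "real^'n^'n"
  assumes "posdef M"
  shows "\<exists>c>0. \<forall>x. c * (x \<bullet> x) \<le> x \<bullet> (M *v x)"
proof -
  have cont: "continuous_on (sphere 0 1) (\<lambda>x::real^'n. x \<bullet> (M *v x))"
    by (intro continuous_intros linear_continuous_on matrix_vector_mul_linear bounded_linear_intros)
  obtain x0 where x0: "x0 \<in> sphere 0 1" and min: "\<And>y. y \<in> sphere 0 1 \<Longrightarrow> x0 \<bullet> (M *v x0) \<le> y \<bullet> (M *v y)"
    using continuous_attains_inf[OF compact_sphere _ cont] by (metis sphere_eq_empty zero_less_one not_less_iff_gr_or_eq)
  define c where "c = x0 \<bullet> (M *v x0)"
  have "x0 \<noteq> 0" using x0 by auto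
  then have cp: "c > 0" unfolding c_def using assms unfolding posdef_def by auto
  have "c * (x \<bullet> x) \<le> x \<bullet> (M *v x)" for x
  proof (cases "x = 0")
    case True then show ?thesis by simp
  next
    case False
    define y where "y = (1 / norm x) *\<^sub>R x"
    have "y \<in> sphere 0 1" using False unfolding y_def by simp
    then have "c \<le> y \<bullet> (M *v y)" using min c_def by blast
    also have "y \<bullet> (M *v y) = (x \<bullet> (M *v x)) / (norm x)^2"
      unfolding y_def by (simp add: matrix_vector_mult_scaleR power2_eq_square)
    finally have "c * (norm x)^2 \<le> x \<bullet> (M *v x)" using False by (simp add: field_simps)
    then show ?thesis by (simp add: power2_norm_eq_inner)
  qed
  then show ?thesis using cp by blast
qed




definition ipW :: "('v \<Rightarrow> 'v \<Rightarrow> real) \<Rightarrow> ('v \<Rightarrow> 'v \<Rightarrow> real) \<Rightarrow> real \<Rightarrow> 'v^'s::finite \<Rightarrow> 'v^'s \<Rightarrow> real" where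
  "ipW L K H u v = (\<Sum>i\<in>UNIV. L (u$i) (v$i) + H * K (u$i) (v$i))"

definition Cop :: "real^'s::finite^'s \<Rightarrow> 'v::real_vector^'s \<Rightarrow> 'v^'s" where
  "Cop C v = (\<chi> i. \<Sum>k\<in>UNIV. C$i$k *\<^sub>R v$k)"

lemma Cop_add: "Cop C (x + y) = Cop C x + Cop C y"
  by (simp add: Cop_def vec_eq_iff scaleR_add_right sum.distrib)
lemma Cop_scale: "Cop C (c *\<^sub>R x) = c *\<^sub>R Cop C x"
  by (simp add: Cop_def vec_eq_iff scaleR_sum_right mult.commute)
lemma Cop_comp: "Cop C (Cop D w) = Cop (C ** D) w"
proof -
  have "(\<Sum>k\<in>UNIV. C$i$k *\<^sub>R (\<Sum>l\<in>UNIV. D$k$l *\<^sub>R w$l)) = (\<Sum>l\<in>UNIV. (\<Sum>k\<in>UNIV. C$i$k * D$k$l) *\<^sub>R w$l)" for i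
  proof -
    have "(\<Sum>k\<in>UNIV. C$i$k *\<^sub>R (\<Sum>l\<in>UNIV. D$k$l *\<^sub>R w$l)) = (\<Sum>k\<in>UNIV. \<Sum>l\<in>UNIV. (C$i$k * D$k$l) *\<^sub>R w$l)"
      by (simp add: scaleR_sum_right)
    also have "\<dots> = (\<Sum>l\<in>UNIV. \<Sum>k\<in>UNIV. (C$i$k * D$k$l) *\<^sub>R w$l)" by (rule sum.swap)
    also have "\<dots> = (\<Sum>l\<in>UNIV. (\<Sum>k\<in>UNIV. C$i$k * D$k$l) *\<^sub>R w$l)" by (simp add: scaleR_sum_left)
    finally show ?thesis .
  qed
  then show ?thesis by (simp add: Cop_def vec_eq_iff matrix_matrix_mult_def)
qed
lemma Cop_id: "Cop (mat 1) (w::'v::real_vector^'s::finite) = w"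
proof -
  have "(\<Sum>k\<in>UNIV. (mat 1 :: real^'s^'s)$i$k *\<^sub>R w$k) = w$i" for i
  proof -
    have "(\<Sum>k\<in>UNIV. (mat 1 :: real^'s^'s)$i$k *\<^sub>R w$k) = (\<Sum>k\<in>UNIV. if i = k then w$k else 0)"
      by (intro sum.cong refl) (simp add: mat_def)
    also have "\<dots> = w$i" by (simp add: sum.delta)
    finally show ?thesis .
  qed
  then show ?thesis by (simp add: Cop_def vec_eq_iff)
qed




lemma main:
  fixes A C D :: "real^'s::finite^'s" and L K :: "'v::real_vector \<Rightarrow> 'v \<Rightarrow> real"
  assumes hs: "hilbert_setting L K h \<mu>" and hp: "h > 0"
    and Csym: "transpose C = C"
    and gam: "\<gamma> > 0" "\<And>x. \<gamma> * (x \<bullet> x) \<le> x \<bullet> (C *v x)"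
    and c0: "c0 > 0" "\<And>x. c0 * (x \<bullet> x) \<le> x \<bullet> ((C ** A) *v x)"
    and Cinv: "C ** D = mat 1"
  shows "bij_betw (Aop A L K h \<mu>) UNIV (Vdual L K h \<mu>)
           \<and> (\<forall>u. dualnorm L K h \<mu> (Aop A L K h \<mu> u) \<le> (real CARD('s) + (\<Sum>i\<in>UNIV. \<Sum>j\<in>UNIV. \<bar>A$i$j\<bar>)) * VVnorm L K h \<mu> u)
           \<and> (\<forall>f\<in>Vdual L K h \<mu>. VVnorm L K h \<mu> (inv_into UNIV (Aop A L K h \<mu>) f)
                 \<le> (sqrt (\<Sum>i\<in>UNIV. \<Sum>k\<in>UNIV. \<Sum>l\<in>UNIV. \<bar>C$i$k\<bar> * \<bar>C$i$l\<bar>) / min \<gamma> c0) * dualnorm L K h \<mu> f)"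
proof -
  define c1 where "c1 = real CARD('s) + (\<Sum>i\<in>UNIV. \<Sum>j\<in>UNIV. \<bar>A$i$j\<bar>)"
  define \<kappa> where "\<kappa> = sqrt (\<Sum>i\<in>UNIV. \<Sum>k\<in>UNIV. \<Sum>l\<in>UNIV. \<bar>C$i$k\<bar> * \<bar>C$i$l\<bar>)"
  define \<alpha> where "\<alpha> = min \<gamma> c0"
  have ap: "\<alpha> > 0" using gam c0 by (simp add: \<alpha>_def)
  have c1p: "c1 \<ge> 0" unfolding c1_def by (simp add: sum_nonneg)
  have kp: "\<kappa> \<ge> 0" unfolding \<kappa>_def by (simp add: sum_nonneg)
  define H where "H = h ^ \<mu>"
  have Hp: "H > 0" using hp by (simp add: H_def)
  from hs have bL: "bilinear L" and bK: "bilinear K" and symL: "\<And>u v. L u v = L v u"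
    and symK: "\<And>u v. K u v = K v u" and Lpos: "\<And>u. u \<noteq> 0 \<Longrightarrow> L u u > 0" and Knn: "\<And>u. K u u \<ge> 0"
    and Vcompl: "\<And>X::nat \<Rightarrow> 'v. (\<forall>e>0. \<exists>N. \<forall>m\<ge>N. \<forall>n\<ge>N. Vnorm L K h \<mu> (X m - X n) < e)
        \<Longrightarrow> (\<exists>x. (\<lambda>n. Vnorm L K h \<mu> (X n - x)) \<longlonglongrightarrow> 0)"
    unfolding hilbert_setting_def by auto
  interpret LF: psdform L
  proof
    fix x y z :: 'v and c :: real
    show "L (x + y) z = L x z + L y z" by (rule bilinear_ladd[OF bL])
    show "L (c *\<^sub>R x) z = c * L x z" using bilinear_lmul[OF bL] by simp
    show "L x y = L y x" by (rule symL)
    show "0 \<le> L x x" using Lpos[of x] bilinear_lzero[OF bL] by (cases "x = 0") auto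
  qed
  interpret KF: psdform K
  proof
    fix x y z :: 'v and c :: real
    show "K (x + y) z = K x z + K y z" by (rule bilinear_ladd[OF bK])
    show "K (c *\<^sub>R x) z = c * K x z" using bilinear_lmul[OF bK] by simp
    show "K x y = K y x" by (rule symK)
    show "0 \<le> K x x" by (rule Knn)
  qed
  define lv where "lv x y = L x y + H * K x y" for x y
  interpret lvF: psdform lv
  proof
    fix x y z :: 'v and c :: real
    show "lv (x + y) z = lv x z + lv y z" by (simp add: lv_def LF.addL KF.addL algebra_simps)
    show "lv (c *\<^sub>R x) z = c * lv x z" by (simp add: lv_def LF.scaleL KF.scaleL algebra_simps)
    show "lv x y = lv y x" by (simp add: lv_def symL symK)
    show "0 \<le> lv x x" using LF.nonneg[of x] KF.nonneg[of x] Hp by (simp add: lv_def)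
  qed
  have ipW_eq: "ipW L K H u v = (\<Sum>i\<in>UNIV. lv (u$i) (v$i))" for u v :: "'v^'s"
    by (simp add: ipW_def lv_def)
  have Vn: "Vnorm L K h \<mu> x = sqrt (lv x x)" for x by (simp add: Vnorm_def lv_def H_def)
  have comp_le: "lv (u$i) (u$i) \<le> ipW L K H u u" for u :: "'v^'s" and i
    unfolding ipW_eq by (rule member_le_sum) (auto simp: lvF.nonneg)
  interpret W: ipspace "ipW L K H :: 'v^'s \<Rightarrow> 'v^'s \<Rightarrow> real"
  proof
    fix x y z :: "'v^'s" and c :: real
    show "ipW L K H (x + y) z = ipW L K H x z + ipW L K H y z"
      by (simp add: ipW_eq lvF.addL sum.distrib)
    show "ipW L K H (c *\<^sub>R x) z = c * ipW L K H x z"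
      by (simp add: ipW_eq lvF.scaleL sum_distrib_left)
    show "ipW L K H x y = ipW L K H y x" by (simp add: ipW_eq lvF.symm)
    show "0 \<le> ipW L K H x x" by (simp add: ipW_eq lvF.nonneg sum_nonneg)
  next
    fix x :: "'v^'s" assume "x \<noteq> 0"
    then obtain i where i: "x$i \<noteq> 0" by (auto simp: vec_eq_iff)
    have "lv (x$i) (x$i) > 0" using Lpos[OF i] KF.nonneg[of "x$i"] Hp by (simp add: lv_def add_pos_nonneg)
    then show "ipW L K H x x > 0" unfolding ipW_eq
      by (intro sum_pos2[of UNIV i]) (auto simp: lvF.nonneg)
  next
    fix X :: "nat \<Rightarrow> 'v^'s"
    assume cau: "\<forall>e>0. \<exists>N. \<forall>m\<ge>N. \<forall>n\<ge>N. sqrt (ipW L K H (X m - X n) (X m - X n)) < e"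
    have "\<forall>i. \<exists>y. (\<lambda>n. Vnorm L K h \<mu> (X n $ i - y)) \<longlonglongrightarrow> 0"
    proof
      fix i
      have "\<forall>e>0. \<exists>N. \<forall>m\<ge>N. \<forall>n\<ge>N. Vnorm L K h \<mu> (X m $ i - X n $ i) < e"
      proof (intro allI impI)
        fix e :: real assume "e > 0"
        then obtain N where N: "\<forall>m\<ge>N. \<forall>n\<ge>N. sqrt (ipW L K H (X m - X n) (X m - X n)) < e"
          using cau by blast
        have "Vnorm L K h \<mu> (X m $ i - X n $ i) < e" if "m \<ge> N" "n \<ge> N" for m n
        proof -
          have "Vnorm L K h \<mu> (X m $ i - X n $ i) = sqrt (lv ((X m - X n)$i) ((X m - X n)$i))"
            by (simp add: Vn)
          also have "\<dots> \<le> sqrt (ipW L K H (X m - X n) (X m - X n))"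
            using comp_le real_sqrt_le_mono by blast
          also have "\<dots> < e" using N that by blast
          finally show ?thesis .
        qed
        then show "\<exists>N. \<forall>m\<ge>N. \<forall>n\<ge>N. Vnorm L K h \<mu> (X m $ i - X n $ i) < e" by blast
      qed
      from Vcompl[OF this] show "\<exists>y. (\<lambda>n. Vnorm L K h \<mu> (X n $ i - y)) \<longlonglongrightarrow> 0" .
    qed
    then obtain Y where Y: "\<And>i. (\<lambda>n. Vnorm L K h \<mu> (X n $ i - Y i)) \<longlonglongrightarrow> 0" by metis
    define x where "x = (\<chi> i. Y i)"
    have eq: "ipW L K H (X n - x) (X n - x) = (\<Sum>i\<in>UNIV. (Vnorm L K h \<mu> (X n $ i - Y i))^2)" for n
      unfolding ipW_eq x_def by (simp add: Vn lvF.nonneg)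
    have "(\<lambda>n. \<Sum>i\<in>UNIV. (Vnorm L K h \<mu> (X n $ i - Y i))^2) \<longlonglongrightarrow> (\<Sum>i\<in>(UNIV::'s set). 0^2)"
      by (intro tendsto_intros Y)
    then have "(\<lambda>n. ipW L K H (X n - x) (X n - x)) \<longlonglongrightarrow> 0" unfolding eq by simp
    then have "(\<lambda>n. sqrt (ipW L K H (X n - x) (X n - x))) \<longlonglongrightarrow> sqrt 0" by (rule tendsto_real_sqrt)
    then show "\<exists>x. (\<lambda>n. sqrt (ipW L K H (X n - x) (X n - x))) \<longlonglongrightarrow> 0" by auto
  qed
  have NN: "VVnorm L K h \<mu> u = W.nrm u" for u
    unfolding W.nrm_def by (simp add: VVnorm_def ipW_def H_def)
  have L_le: "sqrt (L (u$i) (u$i)) \<le> W.nrm u" for u :: "'v^'s" and i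
  proof -
    have "L (u$i) (u$i) \<le> lv (u$i) (u$i)" using KF.nonneg[of "u$i"] Hp by (simp add: lv_def)
    also note comp_le
    finally show ?thesis unfolding W.nrm_def by (rule real_sqrt_le_mono)
  qed
  have K_le: "sqrt (H * K (u$i) (u$i)) \<le> W.nrm u" for u :: "'v^'s" and i
  proof -
    have "H * K (u$i) (u$i) \<le> lv (u$i) (u$i)" using LF.nonneg[of "u$i"] by (simp add: lv_def)
    also note comp_le
    finally show ?thesis unfolding W.nrm_def by (rule real_sqrt_le_mono)
  qed
  have lv_le: "sqrt (lv (u$i) (u$i)) \<le> W.nrm u" for u :: "'v^'s" and i
    unfolding W.nrm_def using comp_le by (rule real_sqrt_le_mono)
  have Lb: "\<bar>L (u$i) (v$j)\<bar> \<le> W.nrm u * W.nrm v" for u v :: "'v^'s" and i j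
  proof -
    have "\<bar>L (u$i) (v$j)\<bar> \<le> sqrt (L (u$i) (u$i)) * sqrt (L (v$j) (v$j))" by (rule LF.CS)
    also have "\<dots> \<le> W.nrm u * W.nrm v" using L_le W.nrm_ge0 LF.nonneg by (intro mult_mono) auto
    finally show ?thesis .
  qed
  have Kb: "\<bar>H * K (u$j) (v$i)\<bar> \<le> W.nrm u * W.nrm v" for u v :: "'v^'s" and i j
  proof -
    have "\<bar>H * K (u$j) (v$i)\<bar> = H * \<bar>K (u$j) (v$i)\<bar>" using Hp by (simp add: abs_mult)
    also have "\<dots> \<le> H * (sqrt (K (u$j) (u$j)) * sqrt (K (v$i) (v$i)))"
      using Hp KF.CS by (intro mult_left_mono) auto
    also have "\<dots> = sqrt (H * K (u$j) (u$j)) * sqrt (H * K (v$i) (v$i))"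
      using Hp by (simp add: real_sqrt_mult)
    also have "\<dots> \<le> W.nrm u * W.nrm v" using K_le W.nrm_ge0 KF.nonneg Hp by (intro mult_mono) auto
    finally show ?thesis .
  qed
  have lvb: "\<bar>lv (v$k) (v$l)\<bar> \<le> (W.nrm v)^2" for v :: "'v^'s" and k l
  proof -
    have "\<bar>lv (v$k) (v$l)\<bar> \<le> sqrt (lv (v$k) (v$k)) * sqrt (lv (v$l) (v$l))" by (rule lvF.CS)
    also have "\<dots> \<le> W.nrm v * W.nrm v" using lv_le W.nrm_ge0 lvF.nonneg by (intro mult_mono) auto
    finally show ?thesis by (simp add: power2_eq_square)
  qed
  define Ao where "Ao = Aop A L K h \<mu>"
  have Ao_eq: "Ao u v = (\<Sum>i\<in>UNIV. L (u$i) (v$i)) + (\<Sum>i\<in>UNIV. \<Sum>j\<in>UNIV. A$i$j * (H * K (u$j) (v$i)))" for u v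
    unfolding Ao_def Aop_def H_def by (simp add: sum_distrib_left mult.left_commute)
  have Ao_addR: "Ao u (x+y) = Ao u x + Ao u y" for u x y
    by (simp add: Ao_eq LF.addR KF.addR sum.distrib algebra_simps)
  have Ao_scaleR: "Ao u (c *\<^sub>R x) = c * Ao u x" for u c x
    by (simp add: Ao_eq LF.scaleR KF.scaleR sum_distrib_left algebra_simps)
  have Ao_addL: "Ao (x+y) v = Ao x v + Ao y v" for v x y
    by (simp add: Ao_eq LF.addL KF.addL sum.distrib algebra_simps)
  have Ao_scaleL: "Ao (c *\<^sub>R x) v = c * Ao x v" for v c x
    by (simp add: Ao_eq LF.scaleL KF.scaleL sum_distrib_left algebra_simps)
  have Ao_bound: "\<bar>Ao u v\<bar> \<le> c1 * W.nrm u * W.nrm v" for u v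
  proof -
    have t1: "\<bar>\<Sum>i\<in>UNIV. L (u$i) (v$i)\<bar> \<le> real CARD('s) * (W.nrm u * W.nrm v)"
    proof -
      have "\<bar>\<Sum>i\<in>UNIV. L (u$i) (v$i)\<bar> \<le> (\<Sum>i\<in>(UNIV::'s set). W.nrm u * W.nrm v)"
        by (rule order_trans[OF sum_abs sum_mono]) (rule Lb)
      then show ?thesis by simp
    qed
    have t2: "\<bar>\<Sum>i\<in>UNIV. \<Sum>j\<in>UNIV. A$i$j * (H * K (u$j) (v$i))\<bar> \<le> (\<Sum>i\<in>UNIV. \<Sum>j\<in>UNIV. \<bar>A$i$j\<bar>) * (W.nrm u * W.nrm v)"
    proof -
      have "\<bar>\<Sum>i\<in>UNIV. \<Sum>j\<in>UNIV. A$i$j * (H * K (u$j) (v$i))\<bar> \<le> (\<Sum>i\<in>UNIV. \<Sum>j\<in>UNIV. \<bar>A$i$j\<bar> * (W.nrm u * W.nrm v))"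
      proof (rule order_trans[OF sum_abs sum_mono])
        fix i assume "i \<in> (UNIV::'s set)"
        show "\<bar>\<Sum>j\<in>UNIV. A$i$j * (H * K (u$j) (v$i))\<bar> \<le> (\<Sum>j\<in>UNIV. \<bar>A$i$j\<bar> * (W.nrm u * W.nrm v))"
        proof (rule order_trans[OF sum_abs sum_mono])
          fix j assume "j \<in> (UNIV::'s set)"
          show "\<bar>A$i$j * (H * K (u$j) (v$i))\<bar> \<le> \<bar>A$i$j\<bar> * (W.nrm u * W.nrm v)"
            unfolding abs_mult[of "A$i$j"] by (intro mult_left_mono Kb) simp
        qed
      qed
      then show ?thesis by (simp add: sum_distrib_right)
    qed
    have "\<bar>Ao u v\<bar> \<le> \<bar>\<Sum>i\<in>UNIV. L (u$i) (v$i)\<bar> + \<bar>\<Sum>i\<in>UNIV. \<Sum>j\<in>UNIV. A$i$j * (H * K (u$j) (v$i))\<bar>"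
      unfolding Ao_eq by (rule abs_triangle_ineq)
    also have "\<dots> \<le> c1 * (W.nrm u * W.nrm v)" using t1 t2 unfolding c1_def by (simp add: distrib_right)
    finally show ?thesis by (simp add: mult.assoc)
  qed
  have Cop_bound: "W.nrm (Cop C v) \<le> \<kappa> * W.nrm v" for v :: "'v^'s"
  proof -
    have "ipW L K H (Cop C v) (Cop C v) = (\<Sum>i\<in>UNIV. \<Sum>k\<in>UNIV. \<Sum>l\<in>UNIV. C$i$k * C$i$l * lv (v$l) (v$k))"
      unfolding ipW_eq Cop_def by (simp add: lvF.sumL lvF.sumR lvF.scaleL lvF.scaleR sum_distrib_left mult.assoc)
    also have "\<dots> \<le> (\<Sum>i\<in>UNIV. \<Sum>k\<in>UNIV. \<Sum>l\<in>UNIV. \<bar>C$i$k\<bar> * \<bar>C$i$l\<bar> * (W.nrm v)^2)"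
    proof (intro sum_mono)
      fix i k l
      have "C$i$k * C$i$l * lv (v$l) (v$k) \<le> \<bar>C$i$k * C$i$l * lv (v$l) (v$k)\<bar>" by simp
      also have "\<dots> = \<bar>C$i$k\<bar> * \<bar>C$i$l\<bar> * \<bar>lv (v$l) (v$k)\<bar>" by (simp add: abs_mult)
      also have "\<dots> \<le> \<bar>C$i$k\<bar> * \<bar>C$i$l\<bar> * (W.nrm v)^2" by (intro mult_left_mono lvb) simp
      finally show "C$i$k * C$i$l * lv (v$l) (v$k) \<le> \<bar>C$i$k\<bar> * \<bar>C$i$l\<bar> * (W.nrm v)^2" .
    qed
    also have "\<dots> = (\<kappa> * W.nrm v)^2"
      unfolding \<kappa>_def power_mult_distrib by (simp add: sum_nonneg sum_distrib_right)
    finally have "ipW L K H (Cop C v) (Cop C v) \<le> (\<kappa> * W.nrm v)^2" .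
    then have "W.nrm (Cop C v) \<le> sqrt ((\<kappa> * W.nrm v)^2)" unfolding W.nrm_def by (rule real_sqrt_le_mono)
    then show ?thesis using kp W.nrm_ge0 by simp
  qed
  have Cs: "C$i$k = C$k$i" for i k
    using arg_cong[OF Csym, of "\<lambda>M. M$i$k"] by (simp add: transpose_def)
  define b where "b u v = Ao u (Cop C v)" for u v
  have b_addL: "b (x+y) z = b x z + b y z" for x y z by (simp add: b_def Ao_addL)
  have b_scaleL: "b (c *\<^sub>R x) z = c * b x z" for c x z by (simp add: b_def Ao_scaleL)
  have b_addR: "b z (x+y) = b z x + b z y" for x y z by (simp add: b_def Ao_addR Cop_add)
  have b_scaleR: "b z (c *\<^sub>R x) = c * b z x" for c x z by (simp add: b_def Ao_scaleR Cop_scale)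
  have b_bound: "\<bar>b u v\<bar> \<le> (c1 * \<kappa>) * W.nrm u * W.nrm v" for u v
  proof -
    have "\<bar>b u v\<bar> \<le> c1 * W.nrm u * W.nrm (Cop C v)" unfolding b_def by (rule Ao_bound)
    also have "\<dots> \<le> c1 * W.nrm u * (\<kappa> * W.nrm v)"
      using c1p W.nrm_ge0 Cop_bound by (intro mult_left_mono) auto
    finally show ?thesis by (simp add: algebra_simps)
  qed
  have b_coer: "\<alpha> * ipW L K H v v \<le> b v v" for v
  proof -
    have T1: "(\<Sum>i\<in>UNIV. L (v$i) (Cop C v $ i)) = (\<Sum>j\<in>UNIV. \<Sum>k\<in>UNIV. C$k$j * L (v$j) (v$k))"
      unfolding Cop_def by (simp add: LF.sumR LF.scaleR Cs[of _ "_::'s"])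
    have T2a: "(\<Sum>i\<in>UNIV. \<Sum>j\<in>UNIV. A$i$j * (H * K (v$j) (Cop C v $ i)))
        = (\<Sum>i\<in>UNIV. \<Sum>j\<in>UNIV. \<Sum>k\<in>UNIV. H * (C$i$k * A$i$j * K (v$j) (v$k)))"
      unfolding Cop_def by (simp add: KF.sumR KF.scaleR sum_distrib_left mult_ac)
    also have "\<dots> = (\<Sum>j\<in>UNIV. \<Sum>i\<in>UNIV. \<Sum>k\<in>UNIV. H * (C$i$k * A$i$j * K (v$j) (v$k)))"
      by (rule sum.swap)
    also have "\<dots> = (\<Sum>j\<in>UNIV. \<Sum>k\<in>UNIV. \<Sum>i\<in>UNIV. H * (C$i$k * A$i$j * K (v$j) (v$k)))"
      by (intro sum.cong refl sum.swap)
    also have "\<dots> = H * (\<Sum>j\<in>UNIV. \<Sum>k\<in>UNIV. (C ** A)$k$j * K (v$j) (v$k))"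
      by (simp add: matrix_matrix_mult_def sum_distrib_left sum_distrib_right Cs[of _ "_::'s"] mult_ac)
    finally have T2: "(\<Sum>i\<in>UNIV. \<Sum>j\<in>UNIV. A$i$j * (H * K (v$j) (Cop C v $ i)))
        = H * (\<Sum>j\<in>UNIV. \<Sum>k\<in>UNIV. (C ** A)$k$j * K (v$j) (v$k))" .
    have e1: "\<gamma> * (\<Sum>j\<in>UNIV. L (v$j) (v$j)) \<le> (\<Sum>j\<in>UNIV. \<Sum>k\<in>UNIV. C$k$j * L (v$j) (v$k))"
      by (rule LF.matrix_form_coer[OF gam(2)])
    have e2: "c0 * (\<Sum>j\<in>UNIV. K (v$j) (v$j)) \<le> (\<Sum>j\<in>UNIV. \<Sum>k\<in>UNIV. (C ** A)$k$j * K (v$j) (v$k))"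
      by (rule KF.matrix_form_coer[OF c0(2)])
    have sL: "0 \<le> (\<Sum>j\<in>UNIV. L (v$j) (v$j))" by (simp add: sum_nonneg LF.nonneg)
    have sK: "0 \<le> (\<Sum>j\<in>UNIV. K (v$j) (v$j))" by (simp add: sum_nonneg KF.nonneg)
    have ip: "ipW L K H v v = (\<Sum>j\<in>UNIV. L (v$j) (v$j)) + H * (\<Sum>j\<in>UNIV. K (v$j) (v$j))"
      by (simp add: ipW_def sum.distrib sum_distrib_left)
    have "\<alpha> * ipW L K H v v = \<alpha> * (\<Sum>j\<in>UNIV. L (v$j) (v$j)) + H * (\<alpha> * (\<Sum>j\<in>UNIV. K (v$j) (v$j)))"
      unfolding ip by (simp add: algebra_simps)
    also have "\<dots> \<le> \<gamma> * (\<Sum>j\<in>UNIV. L (v$j) (v$j)) + H * (c0 * (\<Sum>j\<in>UNIV. K (v$j) (v$j)))"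
      using sL sK Hp by (intro add_mono mult_left_mono mult_right_mono) (auto simp: \<alpha>_def)
    also have "\<dots> \<le> (\<Sum>j\<in>UNIV. \<Sum>k\<in>UNIV. C$k$j * L (v$j) (v$k)) + H * (\<Sum>j\<in>UNIV. \<Sum>k\<in>UNIV. (C ** A)$k$j * K (v$j) (v$k))"
      using e1 e2 Hp by (intro add_mono mult_left_mono) auto
    also have "\<dots> = b v v" unfolding b_def Ao_eq T1 T2 ..
    finally show ?thesis .
  qed
  have nrm0: "v = 0" if "W.nrm v = 0" for v :: "'v^'s"
  proof (rule ccontr)
    assume "v \<noteq> 0"
    then have "ipW L K H v v > 0" by (rule W.pos)
    then have "W.nrm v > 0" unfolding W.nrm_def by simp
    then show False using that by simp
  qed
  have Vd: "Vdual L K h \<mu> = {f. linear f \<and> (\<exists>B. \<forall>u. \<bar>f u\<bar> \<le> B * W.nrm u)}"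
    by (simp add: Vdual_def NN)
  have dn: "dualnorm L K h \<mu> f = (SUP u. \<bar>f u\<bar> / W.nrm u)" for f :: "'v^'s \<Rightarrow> real"
    by (simp add: dualnorm_def NN)
  have lin1: "f (x + y) = f x + f y" if "f \<in> Vdual L K h \<mu>" for f :: "'v^'s \<Rightarrow> real" and x y
    using that by (simp add: Vd linear_iff)
  have lin2: "f (c *\<^sub>R x) = c * f x" if "f \<in> Vdual L K h \<mu>" for f :: "'v^'s \<Rightarrow> real" and x c
    using that by (simp add: Vd linear_iff)
  note lin = lin1 lin2
  have dn_ub: "\<bar>f v\<bar> \<le> dualnorm L K h \<mu> f * W.nrm v \<and> 0 \<le> dualnorm L K h \<mu> f" if f: "f \<in> Vdual L K h \<mu>" for f v
  proof -
    obtain B where B: "\<And>u. \<bar>f u\<bar> \<le> B * W.nrm u" using f unfolding Vd by auto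
    have bdd: "bdd_above (range (\<lambda>u. \<bar>f u\<bar> / W.nrm u))"
    proof (rule bdd_aboveI2)
      fix u
      show "\<bar>f u\<bar> / W.nrm u \<le> max B 0"
      proof (cases "W.nrm u = 0")
        case True then show ?thesis by simp
      next
        case False
        then have "W.nrm u > 0" using W.nrm_ge0 by (simp add: order_less_le)
        then have "\<bar>f u\<bar> / W.nrm u \<le> B" using B[of u] by (simp add: divide_le_eq)
        then show ?thesis by simp
      qed
    qed
    have f0: "f 0 = 0" using lin2[OF f, of 0 0] by simp
    have "\<bar>f 0\<bar> / W.nrm 0 \<le> (SUP u. \<bar>f u\<bar> / W.nrm u)" by (rule cSUP_upper[OF _ bdd]) simp
    then have nn: "0 \<le> dualnorm L K h \<mu> f" unfolding dn by (simp add: f0)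
    have "\<bar>f v\<bar> \<le> dualnorm L K h \<mu> f * W.nrm v"
    proof (cases "W.nrm v = 0")
      case True then have "v = 0" by (rule nrm0)
      then show ?thesis using f0 by (simp add: W.nrm_def)
    next
      case False
      then have p: "W.nrm v > 0" using W.nrm_ge0 by (simp add: order_less_le)
      have "\<bar>f v\<bar> / W.nrm v \<le> dualnorm L K h \<mu> f" unfolding dn by (rule cSUP_upper[OF _ bdd]) simp
      then show ?thesis using p by (simp add: divide_le_eq)
    qed
    with nn show ?thesis by simp
  qed
  have dn_le: "dualnorm L K h \<mu> f \<le> D" if "\<And>v. \<bar>f v\<bar> \<le> D * W.nrm v" "D \<ge> 0" for f D
    unfolding dn
  proof (rule cSUP_least)
    fix u
    show "\<bar>f u\<bar> / W.nrm u \<le> D"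
    proof (cases "W.nrm u = 0")
      case True then show ?thesis using that by simp
    next
      case False
      then have "W.nrm u > 0" using W.nrm_ge0 by (simp add: order_less_le)
      then show ?thesis using that(1)[of u] by (simp add: divide_le_eq)
    qed
  qed simp
  have Ao_in: "Ao u \<in> Vdual L K h \<mu>" for u
    unfolding Vd linear_iff
    using Ao_addR Ao_scaleR Ao_bound by (auto intro!: exI[of _ "c1 * W.nrm u"])
  have b_diffL: "b (x - y) z = b x z - b y z" for x y z
    using b_addL[of x "(-1) *\<^sub>R y" z] b_scaleL[of "-1" y z] by simp
  have injAo: "inj Ao"
  proof (rule injI)
    fix x y assume "Ao x = Ao y"
    then have "b x z = b y z" for z by (simp add: b_def)
    then have "b (x - y) (x - y) = 0" by (simp add: b_diffL)
    then have "\<alpha> * ipW L K H (x - y) (x - y) \<le> 0" using b_coer[of "x - y"] by simp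
    then have "ipW L K H (x - y) (x - y) \<le> 0" using ap by (simp add: mult_le_0_iff)
    then have "x - y = 0" using W.pos[of "x - y"] by (cases "x - y = 0") auto
    then show "x = y" by simp
  qed
  have surj: "\<exists>u. Ao u = f" if f: "f \<in> Vdual L K h \<mu>" for f
  proof -
    have "\<exists>u. \<forall>v. b u v = f (Cop C v)"
    proof (rule W.laxmilgram[of b \<alpha> "c1 * \<kappa>" "\<lambda>v. f (Cop C v)" "dualnorm L K h \<mu> f * \<kappa>"])
      show "\<And>x y z. b (x + y) z = b x z + b y z" by (rule b_addL)
      show "\<And>c x z. b (c *\<^sub>R x) z = c * b x z" by (rule b_scaleL)
      show "\<And>x y z. b z (x + y) = b z x + b z y" by (rule b_addR)
      show "\<And>c x z. b z (c *\<^sub>R x) = c * b z x" by (rule b_scaleR)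
      show "0 < \<alpha>" by (rule ap)
      show "\<And>v. \<alpha> * ipW L K H v v \<le> b v v" by (rule b_coer)
      show "0 \<le> c1 * \<kappa>" using c1p kp by simp
      show "\<And>u v. \<bar>b u v\<bar> \<le> c1 * \<kappa> * W.nrm u * W.nrm v" by (rule b_bound)
      show "\<And>x y. f (Cop C (x + y)) = f (Cop C x) + f (Cop C y)" by (simp add: Cop_add lin1[OF f] lin2[OF f])
      show "\<And>c x. f (Cop C (c *\<^sub>R x)) = c * f (Cop C x)" by (simp add: Cop_scale lin1[OF f] lin2[OF f])
      show "\<bar>f (Cop C v)\<bar> \<le> dualnorm L K h \<mu> f * \<kappa> * W.nrm v" for v
      proof -
        have "\<bar>f (Cop C v)\<bar> \<le> dualnorm L K h \<mu> f * W.nrm (Cop C v)" using dn_ub[OF f] by blast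
        also have "\<dots> \<le> dualnorm L K h \<mu> f * (\<kappa> * W.nrm v)"
          using dn_ub[OF f] Cop_bound by (intro mult_left_mono) auto
        finally show ?thesis by (simp add: mult.assoc)
      qed
    qed
    then obtain u where u: "\<And>v. Ao u (Cop C v) = f (Cop C v)" unfolding b_def by blast
    have "Ao u w = f w" for w
    proof -
      have "w = Cop C (Cop D w)" by (simp add: Cop_comp Cinv Cop_id)
      then show ?thesis using u by metis
    qed
    then show ?thesis by blast
  qed
  have bij: "bij_betw Ao UNIV (Vdual L K h \<mu>)"
    unfolding bij_betw_def using injAo Ao_in surj by blast
  have dnb: "\<forall>u. dualnorm L K h \<mu> (Ao u) \<le> c1 * W.nrm u"
    using Ao_bound c1p W.nrm_ge0 by (intro allI dn_le) (auto simp: mult.assoc)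
  have invb: "\<forall>f\<in>Vdual L K h \<mu>. W.nrm (inv_into UNIV Ao f) \<le> (\<kappa> / \<alpha>) * dualnorm L K h \<mu> f"
  proof
    fix f :: "'v^'s \<Rightarrow> real" assume f: "f \<in> Vdual L K h \<mu>"
    obtain u where u: "Ao u = f" using surj[OF f] by blast
    have iu: "inv_into UNIV Ao f = u" using u injAo by (metis inv_into_f_f UNIV_I)
    have "\<alpha> * (W.nrm u)^2 \<le> b u u" using b_coer[of u] by (simp add: W.nrm_sq)
    also have "\<dots> = f (Cop C u)" by (simp add: b_def u)
    also have "\<dots> \<le> dualnorm L K h \<mu> f * W.nrm (Cop C u)" using dn_ub[OF f] by (meson abs_ge_self order_trans)
    also have "\<dots> \<le> dualnorm L K h \<mu> f * (\<kappa> * W.nrm u)"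
      using dn_ub[OF f] Cop_bound by (intro mult_left_mono) auto
    finally have ineq: "\<alpha> * (W.nrm u)^2 \<le> dualnorm L K h \<mu> f * \<kappa> * W.nrm u" by (simp add: mult.assoc)
    have "W.nrm u \<le> (\<kappa> / \<alpha>) * dualnorm L K h \<mu> f"
    proof (cases "W.nrm u = 0")
      case True then show ?thesis using kp ap dn_ub[OF f] by simp
    next
      case False
      then have p: "W.nrm u > 0" using W.nrm_ge0 by (simp add: order_less_le)
      from ineq have "(\<alpha> * W.nrm u) * W.nrm u \<le> (dualnorm L K h \<mu> f * \<kappa>) * W.nrm u"
        by (simp add: power2_eq_square mult.assoc)
      then have "\<alpha> * W.nrm u \<le> dualnorm L K h \<mu> f * \<kappa>" using p by simp
      then show ?thesis using ap by (simp add: field_simps)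
    qed
    then show "W.nrm (inv_into UNIV Ao f) \<le> (\<kappa> / \<alpha>) * dualnorm L K h \<mu> f" using iu by simp
  qed
  show ?thesis
    unfolding NN c1_def[symmetric] \<kappa>_def[symmetric] \<alpha>_def[symmetric] Ao_def[symmetric]
    using bij dnb invb by blast
qed


theorem theorem3p1:
  fixes A :: "real^'s::finite^'s"
  assumes "weakly_posdef A"
  shows "\<exists>c1 c2::real. \<forall>(L::'v::real_vector \<Rightarrow> 'v \<Rightarrow> real) K h \<mu>.
           hilbert_setting L K h \<mu> \<and> h > 0 \<and> \<mu> \<in> {1, 2} \<longrightarrow>
             bij_betw (Aop A L K h \<mu>) UNIV (Vdual L K h \<mu>)
           \<and> (\<forall>u. dualnorm L K h \<mu> (Aop A L K h \<mu> u) \<le> c1 * VVnorm L K h \<mu> u)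
           \<and> (\<forall>f\<in>Vdual L K h \<mu>.
                VVnorm L K h \<mu> (inv_into UNIV (Aop A L K h \<mu>) f) \<le> c2 * dualnorm L K h \<mu> f)"
proof -
  obtain C where Csym: "transpose C = C" and pC: "posdef C" and pCA: "posdef (C ** A)"
    using assms unfolding weakly_posdef_def by blast
  obtain \<gamma> where gam: "\<gamma> > 0" "\<forall>x. \<gamma> * (x \<bullet> x) \<le> x \<bullet> (C *v x)"
    using posdef_coercive[OF pC] by blast
  obtain c0 where c0: "c0 > 0" "\<forall>x. c0 * (x \<bullet> x) \<le> x \<bullet> ((C ** A) *v x)"
    using posdef_coercive[OF pCA] by blast
  have "\<forall>x. C *v x = 0 \<longrightarrow> x = 0"
  proof (intro allI impI)
    fix x :: "real^'s" assume "C *v x = 0"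
    then have "x \<bullet> (C *v x) = 0" by simp
    then show "x = 0" using pC unfolding posdef_def by (metis less_irrefl)
  qed
  then obtain D where "D ** C = mat 1" using matrix_left_invertible_ker by blast
  then have Cinv: "C ** D = mat 1" using matrix_left_right_inverse by blast
  show ?thesis
  proof (intro exI allI impI)
    fix L :: "'v::real_vector \<Rightarrow> 'v \<Rightarrow> real" and K h \<mu>
    assume h: "hilbert_setting L K h \<mu> \<and> h > 0 \<and> \<mu> \<in> {1, 2}"
    show "bij_betw (Aop A L K h \<mu>) UNIV (Vdual L K h \<mu>)
           \<and> (\<forall>u. dualnorm L K h \<mu> (Aop A L K h \<mu> u) \<le> (real CARD('s) + (\<Sum>i\<in>UNIV. \<Sum>j\<in>UNIV. \<bar>A$i$j\<bar>)) * VVnorm L K h \<mu> u)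
           \<and> (\<forall>f\<in>Vdual L K h \<mu>. VVnorm L K h \<mu> (inv_into UNIV (Aop A L K h \<mu>) f)
                 \<le> (sqrt (\<Sum>i\<in>UNIV. \<Sum>k\<in>UNIV. \<Sum>l\<in>UNIV. \<bar>C$i$k\<bar> * \<bar>C$i$l\<bar>) / min \<gamma> c0) * dualnorm L K h \<mu> f)"
      using h by (intro main[OF _ _ Csym gam(1) gam(2)[rule_format] c0(1) c0(2)[rule_format] Cinv]) auto
  qed
qed

end
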